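(* Let $n$ be even, let $V$ be an $n$-dimensional $\mathbb{F}_2$-vector space, and let $h:V\to\mathbb{F}_2$ be a Maiorana–McFarland bent function which has a unique $\mathcal{M}$-subspace $\mathcal{W}$ of dimension $n/2$ such that every nontrivial $\mathcal{M}$-subspace $\mathcal{U}$ of $h$ satisfies $\mathcal{U}\subseteq\mathcal{W}$. Let $\widetilde{\mathcal{W}}$ be a subspace with $\mathcal{W}\cap\widetilde{\mathcal{W}}=\{0\}$ and $\mathcal{W}+\widetilde{\mathcal{W}}=V$, and let $L$ be a linear permutation of $V$ with $L(\widetilde{\mathcal{W}})=\mathcal{W}$. Let $k$ be a positive integer, $V_0=\{z\in\mathbb{F}_{2^k}:{\rm Tr}_1^k(z)=0\}$, and for $z\in\mathbb{F}_{2^k}$ put $f^{(z)}=h$ if $z\in V_0$ and $f^{(z)}=h\circ L$ if $z\notin V_0$. If $n>2k+4$, then the function $f:V\times\mathbb{F}_{2^k}\times\mathbb{F}_{2^k}\to\mathbb{F}_2$, $f(x,y,z)=f^{(z)}(x)+{\rm Tr}_1^k(yz)$, is not (EA-equivalent to) a Maiorana–McFarland function, i.e. $f\notin MM^{\#}$; equivalently, every $\mathcal{M}$-subspace $\mathcal{U}$ of $f$ satisfies $\dim\mathcal{U}<n/2+k$.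
   Context: ${\rm Tr}_1^k$ is the absolute trace of $\mathbb{F}_{2^k}$. For a Boolean function $g$ on an $\mathbb{F}_2$-space $X$, $D_aD_bg(x)=g(x)+g(x+a)+g(x+b)+g(x+a+b)$. A subspace $\mathcal{U}\subseteq X$ is an $\mathcal{M}$-subspace of $g$ if $D_aD_bg(x)=0$ for all $a,b\in\mathcal{U}$ and all $x\in X$; it is nontrivial if its dimension is at least $2$. A Boolean function $g$ on $X$ is bent if all its Walsh values $\sum_x(-1)^{g(x)+\langle b,x\rangle}$ have absolute value $2^{\dim X/2}$. Two Boolean functions $f,g$ on $X$ are EA-equivalent if $g(x)=f(L'(x)+a)+\langle c,x\rangle+b$ with $L'$ a linear permutation of $X$, $a,c\in X$, $b\in\mathbb{F}_2$. The Maiorana–McFarland class on $\mathbb{F}_{2^N}\times\mathbb{F}_{2^N}$ consists of functions ${\rm Tr}_1^N(x\pi(y))+g(y)$ with $\pi$ a permutation of $\mathbb{F}_{2^N}$; $MM^{\#}$ is the set of Boolean functions on a $2N$-dimensional $\mathbb{F}_2$-space EA-equivalent (after a linear identification of the space with $\mathbb{F}_{2^N}^2$) to such a function. A bent function on a $2N$-dimensional space is a Maiorana–McFarland bent function (lies in $MM^{\#}$) iff it has an $\mathcal{M}$-subspace of dimension $N$. *)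

theory Defs
  imports Main "HOL-Library.Z2" "HOL-Library.Product_Plus"
begin

text \<open>F_2-vector spaces are modelled as (finite) abelian groups in which every element
  has order dividing 2 (x + x = 0); F_2-scalar multiplication is then forced
  (0 x = 0, 1 x = x), so F_2-subspaces are exactly the additive subgroups and F_2-linear
  maps are exactly the additive maps.\<close>

definition f2_subspace :: "'a::ab_group_add set \<Rightarrow> bool" where
  "f2_subspace U \<longleftrightarrow> 0 \<in> U \<and> (\<forall>a\<in>U. \<forall>b\<in>U. a + b \<in> U)"

definition f2_dim :: "'a::ab_group_add set \<Rightarrow> nat" where
  "f2_dim U = (THE d. card U = 2 ^ d)"

definition f2_linear :: "('a::ab_group_add \<Rightarrow> 'b::ab_group_add) \<Rightarrow> bool" where
  "f2_linear L \<longleftrightarrow> (\<forall>x y. L (x + y) = L x + L y)"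

definition DD :: "('a::ab_group_add \<Rightarrow> bit) \<Rightarrow> 'a \<Rightarrow> 'a \<Rightarrow> 'a \<Rightarrow> bit" where
  "DD g a b x = g x + g (x + a) + g (x + b) + g (x + a + b)"

definition M_subspace :: "('a::ab_group_add \<Rightarrow> bit) \<Rightarrow> 'a set \<Rightarrow> bool" where
  "M_subspace g U \<longleftrightarrow> f2_subspace U \<and> (\<forall>a\<in>U. \<forall>b\<in>U. \<forall>x. DD g a b x = 0)"

definition nontrivial_M_subspace :: "('a::ab_group_add \<Rightarrow> bit) \<Rightarrow> 'a set \<Rightarrow> bool" where
  "nontrivial_M_subspace g U \<longleftrightarrow> M_subspace g U \<and> f2_dim U \<ge> 2"

definition sgn_bit :: "bit \<Rightarrow> int" where
  "sgn_bit c = (if c = 0 then 1 else -1)"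

text \<open>Walsh value at the linear functional l (the functionals x \<mapsto> <b,x> are exactly
  the F_2-linear maps V \<rightarrow> F_2).\<close>
definition walsh :: "('a::{ab_group_add,finite} \<Rightarrow> bit) \<Rightarrow> ('a \<Rightarrow> bit) \<Rightarrow> int" where
  "walsh g l = (\<Sum>x\<in>UNIV. sgn_bit (g x + l x))"

definition bent :: "nat \<Rightarrow> ('a::{ab_group_add,finite} \<Rightarrow> bit) \<Rightarrow> bool" where
  "bent n g \<longleftrightarrow> (\<forall>l::'a \<Rightarrow> bit. f2_linear l \<longrightarrow> \<bar>walsh g l\<bar> = 2 ^ (n div 2))"

definition trace :: "nat \<Rightarrow> 'f::field \<Rightarrow> 'f" where
  "trace k z = (\<Sum>i<k. z ^ (2 ^ i))"

definition tr_bit :: "nat \<Rightarrow> 'f::field \<Rightarrow> bit" where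
  "tr_bit k z = (if trace k z = 0 then 0 else 1)"

end

theory Submission imports Defs "HOL-Number_Theory.Residues" "HOL-Computational_Algebra.Polynomial" begin

definition sp :: "'a::ab_group_add set \<Rightarrow> 'a set" where
  "sp S = {x. \<forall>V. f2_subspace V \<and> S \<subseteq> V \<longrightarrow> x \<in> V}"

lemma sp_sub: "f2_subspace (sp S)"
  unfolding sp_def f2_subspace_def by blast

lemma sp_incl: "S \<subseteq> sp S"
  unfolding sp_def by blast

lemma sp_min: "f2_subspace V \<Longrightarrow> S \<subseteq> V \<Longrightarrow> sp S \<subseteq> V"
  unfolding sp_def by blast

lemma sp_mono: "S \<subseteq> T \<Longrightarrow> sp S \<subseteq> sp T"
  unfolding sp_def by blast

lemma sp_insert:
  fixes a :: "'a::ab_group_add"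
  assumes c2: "\<forall>x::'a. x + x = 0"
  shows "sp (insert a S) = sp S \<union> (\<lambda>s. a + s) ` sp S"
proof
  have "f2_subspace (sp S \<union> (\<lambda>s. a + s) ` sp S)"
  proof -
    have "a + s + (a + t) = s + t" for s t :: 'a
    proof -
      have "a + s + (a + t) = (a + a) + (s + t)" by (simp add: algebra_simps)
      then show ?thesis using c2 by simp
    qed
    then show ?thesis using sp_sub[of S] unfolding f2_subspace_def
      by (auto simp: add.assoc[symmetric]) (metis add.assoc add.commute)+
  qed
  moreover have "insert a S \<subseteq> sp S \<union> (\<lambda>s. a + s) ` sp S"
    using sp_incl[of S] sp_sub[of S] unfolding f2_subspace_def by force
  ultimately show "sp (insert a S) \<subseteq> sp S \<union> (\<lambda>s. a + s) ` sp S" by (rule sp_min)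
next
  have "sp S \<subseteq> sp (insert a S)" by (rule sp_mono) auto
  moreover have "a \<in> sp (insert a S)" using sp_incl by blast
  ultimately show "sp S \<union> (\<lambda>s. a + s) ` sp S \<subseteq> sp (insert a S)"
    using sp_sub[of "insert a S"] unfolding f2_subspace_def by blast
qed

lemma sp_card:
  fixes S :: "'a::{ab_group_add,finite} set"
  assumes c2: "\<forall>x::'a. x + x = 0"
  shows "\<exists>d. card (sp S) = 2 ^ d"
proof -
  have "finite S" by simp
  then show ?thesis
  proof (induction S rule: finite_induct)
    case empty
    have "sp ({}::'a set) \<subseteq> {0}" by (rule sp_min) (auto simp: f2_subspace_def)
    moreover have "0 \<in> sp ({}::'a set)" using sp_sub unfolding f2_subspace_def by blast
    ultimately have "sp ({}::'a set) = {0}" by blast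
    then show ?case by (intro exI[of _ 0]) simp
  next
    case (insert a S)
    then obtain d where d: "card (sp S) = 2 ^ d" by blast
    show ?case
    proof (cases "a \<in> sp S")
      case True
      have "(\<lambda>s. a + s) ` sp S \<subseteq> sp S"
        using True sp_sub[of S] unfolding f2_subspace_def by blast
      then have "sp (insert a S) = sp S" using sp_insert[OF c2] by blast
      then show ?thesis using d by auto
    next
      case False
      have disj: "sp S \<inter> (\<lambda>s. a + s) ` sp S = {}"
      proof (rule ccontr)
        assume "sp S \<inter> (\<lambda>s. a + s) ` sp S \<noteq> {}"
        then obtain s t where st: "s \<in> sp S" "t \<in> sp S" "t = a + s" by blast
        have "a = t + s" using st(3) c2 by (metis add.assoc add.right_neutral)
        then have "a \<in> sp S" using st sp_sub[of S] unfolding f2_subspace_def by blast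
        then show False using False by blast
      qed
      have "card ((\<lambda>s. a + s) ` sp S) = card (sp S)"
        by (rule card_image) (auto simp: inj_on_def)
      then have "card (sp (insert a S)) = 2 ^ Suc d"
        using sp_insert[OF c2, of a S] disj d by (simp add: card_Un_disjoint)
      then show ?thesis by blast
    qed
  qed
qed

lemma subspace_card:
  fixes U :: "'a::{ab_group_add,finite} set"
  assumes c2: "\<forall>x::'a. x + x = 0" and U: "f2_subspace U"
  shows "\<exists>d. card U = 2 ^ d"
proof -
  have "sp U = U" using sp_min[OF U, of U] sp_incl[of U] by blast
  then show ?thesis using sp_card[OF c2, of U] by simp
qed

lemma f2_dim_eq: "card U = 2 ^ d \<Longrightarrow> f2_dim U = d"
  unfolding f2_dim_def by (rule the_equality) auto

lemma char2_field:
  assumes "card (UNIV :: 'f::{field,finite} set) = 2 ^ k" "k > 0"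
  shows "\<forall>x::'f. x + x = 0"
proof -
  have "CHAR('f) dvd 2 ^ k" using CHAR_dvd_CARD[where ?'a='f] assms by simp
  moreover have "prime CHAR('f)"
    by (rule prime_CHAR_semidom) (simp add: finite_imp_CHAR_pos)
  ultimately have "CHAR('f) dvd 2" using prime_dvd_power by blast
  then have "CHAR('f) = 2" using \<open>prime CHAR('f)\<close>
    by (metis prime_nat_iff two_is_prime_nat prime_gt_1_nat less_irrefl)
  then have "(of_nat 2 :: 'f) = 0" by (metis of_nat_CHAR)
  then have "(1 + 1 :: 'f) = 0" by simp
  then show ?thesis by (metis distrib_right mult_1 mult_zero_left)
qed

lemma trace_nonzero:
  assumes "card (UNIV :: 'f::{field,finite} set) = 2 ^ k" "k > 0"
  shows "\<exists>z::'f. trace k z \<noteq> 0"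
proof (rule ccontr)
  assume H: "\<not> ?thesis"
  define p :: "'f poly" where "p = (\<Sum>i<k. monom 1 (2 ^ i))"
  have ev: "poly p z = trace k z" for z
    unfolding p_def trace_def by (simp add: poly_sum poly_monom)
  have "coeff p (2 ^ (k - 1)) = (\<Sum>i<k. if 2 ^ (k-1) = (2::nat) ^ i then 1 else 0)"
    unfolding p_def by (simp add: coeff_sum coeff_monom)
  also have "\<dots> = (\<Sum>i\<in>{k-1}. 1)"
    using assms(2) by (intro sum.mono_neutral_cong_right) auto
  finally have "p \<noteq> 0" by auto
  have "degree p \<le> 2 ^ (k - 1)"
    unfolding p_def by (rule degree_sum_le) (auto intro: order.trans[OF degree_monom_le])
  moreover have "card {x. poly p x = 0} \<le> degree p" by (rule card_poly_roots_bound) fact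
  moreover have "{x. poly p x = 0} = UNIV" using H ev by auto
  ultimately have "card (UNIV :: 'f set) \<le> 2 ^ (k - 1)" by simp
  moreover have "(2::nat) ^ (k - 1) < 2 ^ k" using assms(2) by simp
  ultimately show False using assms(1) by linarith
qed

theorem proposition3p4:
  fixes n k :: nat
    and h :: "'v::{ab_group_add,finite} \<Rightarrow> bit"
    and W W' :: "'v set"
    and L :: "'v \<Rightarrow> 'v"
  assumes char2_V: "\<forall>x::'v. x + x = 0"
    and dimV: "card (UNIV :: 'v set) = 2 ^ n"
    and n_even: "even n"
    and h_bent: "bent n h"
    and W_M: "M_subspace h W" and W_dim: "f2_dim W = n div 2"
    and W_unique: "\<forall>W''. M_subspace h W'' \<and> f2_dim W'' = n div 2 \<longrightarrow> W'' = W"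
    and W_max: "\<forall>U. nontrivial_M_subspace h U \<longrightarrow> U \<subseteq> W"
    and W'_sub: "f2_subspace W'"
    and W_int: "W \<inter> W' = {0}"
    and W_sum: "{a + b | a b. a \<in> W \<and> b \<in> W'} = UNIV"
    and L_lin: "f2_linear L" and L_bij: "bij L"
    and L_W: "L ` W' = W"
    and k_pos: "k > 0"
    and card_F: "card (UNIV :: 'f::{field,finite} set) = 2 ^ k"
    and n_big: "n > 2 * k + 4"
  shows "\<forall>U. M_subspace
            (\<lambda>(x, y, z :: 'f). (if trace k z = 0 then h x else h (L x)) + tr_bit k (y * z))
            U \<longrightarrow> f2_dim U < n div 2 + k"
proof (intro allI impI)
  define F where "F = (\<lambda>(x, y, z :: 'f). (if trace k z = 0 then h x else h (L x)) + tr_bit k (y * z))"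
  fix U assume UM0: "M_subspace
            (\<lambda>(x, y, z :: 'f). (if trace k z = 0 then h x else h (L x)) + tr_bit k (y * z)) U"
  then have UM: "M_subspace F U" unfolding F_def .
  have c2f: "\<forall>x::'f. x + x = 0" by (rule char2_field[OF card_F k_pos])
  have c2: "\<forall>x::'v \<times> 'f \<times> 'f. x + x = 0" using c2f char2_V by (auto simp: prod_eq_iff)
  have Usub: "f2_subspace U" using UM unfolding M_subspace_def by blast
  obtain d where d: "card U = 2 ^ d" using subspace_card[OF c2 Usub] by blast
  have fd: "f2_dim U = d" by (rule f2_dim_eq[OF d])
  show "f2_dim U < n div 2 + k"
  proof (rule ccontr)
    assume "\<not> f2_dim U < n div 2 + k"
    then have dge: "d \<ge> n div 2 + k" using fd by simp
    define P where "P = {x. (x, 0, 0) \<in> U}"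
    have Psub: "f2_subspace P"
      using Usub unfolding P_def f2_subspace_def zero_prod_def
      by (metis (no_types, lifting) add_Pair add_0 mem_Collect_eq)
    obtain e where e: "card P = 2 ^ e" using subspace_card[OF char2_V Psub] by blast
    define r where "r = (\<lambda>w. SOME u. u \<in> U \<and> snd u = w)"
    have r: "u \<in> U \<Longrightarrow> r (snd u) \<in> U \<and> snd (r (snd u)) = snd u" for u
      unfolding r_def by (rule someI[of _ u]) simp
    define g where "g = (\<lambda>u. (fst (u - r (snd u)), snd u))"
    have neg: "- (w::'v \<times> 'f \<times> 'f) = w" for w using c2 by (metis add_eq_0_iff)
    have gin: "u \<in> U \<Longrightarrow> g u \<in> P \<times> UNIV" for u
    proof -
      assume uU: "u \<in> U"
      have "u - r (snd u) = u + r (snd u)" by (simp only: diff_conv_add_uminus neg)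
      moreover have "u + r (snd u) \<in> U" using r[OF uU] uU Usub unfolding f2_subspace_def by blast
      ultimately have inU: "u - r (snd u) \<in> U" by (simp only:)
      have "snd (u - r (snd u)) = 0" using r[OF uU] by simp
      then have "u - r (snd u) = (fst (u - r (snd u)), 0, 0)"
        by (metis prod.collapse zero_prod_def)
      then show ?thesis using inU unfolding g_def P_def by (metis SigmaI UNIV_I mem_Collect_eq)
    qed
    have "inj_on g U"
    proof (rule inj_onI)
      fix u u' assume "u \<in> U" "u' \<in> U" "g u = g u'"
      then have s: "snd u = snd u'" and f: "fst (u - r (snd u)) = fst (u' - r (snd u'))"
        unfolding g_def by auto
      have "snd (u - r (snd u)) = snd (u' - r (snd u'))" using s by simp
      then have "u - r (snd u) = u' - r (snd u')" using f by (simp add: prod_eq_iff)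
      then show "u = u'" using s by simp
    qed
    moreover have "g ` U \<subseteq> P \<times> (UNIV :: ('f \<times> 'f) set)" using gin by blast
    ultimately have "card U \<le> card (P \<times> (UNIV :: ('f \<times> 'f) set))"
      by (intro card_inj_on_le) auto
    also have "\<dots> = card P * (card (UNIV :: 'f set) * card (UNIV :: 'f set))"
      by (simp add: card_cartesian_product UNIV_Times_UNIV[symmetric] del: UNIV_Times_UNIV)
    finally have "(2::nat) ^ d \<le> 2 ^ (e + 2 * k)" using d e card_F by (simp add: power_add mult_2 )
    then have "d \<le> e + 2 * k" by simp
    then have e3: "e \<ge> 3" using dge n_big n_even by auto
    then have "card P \<ge> 2 ^ 3" using e by (metis power_increasing one_le_numeral)
    then have cardP: "card P \<ge> 2" by simp
    have fdP: "f2_dim P \<ge> 2" using f2_dim_eq[OF e] e3 by simp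
    have tr0: "trace k (0::'f) = 0" unfolding trace_def by (simp add: power_0_left)
    have tb0: "tr_bit k (0::'f) = 0" unfolding tr_bit_def using tr0 by simp
    have DDU: "DD F (a, 0, 0) (b, 0, 0) w = 0" if "a \<in> P" "b \<in> P" for a b w
      using UM that unfolding M_subspace_def P_def by blast
    have "M_subspace h P"
      unfolding M_subspace_def
    proof (intro conjI Psub ballI allI)
      fix a b x assume "a \<in> P" "b \<in> P"
      from DDU[OF this, of "(x, 0, 0)"] show "DD h a b x = 0"
        unfolding DD_def F_def using tr0 tb0 by simp
    qed
    then have PW: "P \<subseteq> W" using W_max fdP unfolding nontrivial_M_subspace_def by blast
    obtain z0 :: 'f where z0: "trace k z0 \<noteq> 0" using trace_nonzero[OF card_F k_pos] by blast
    have Lplus: "L (x + y) = L x + L y" for x y using L_lin unfolding f2_linear_def by blast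
    have L0: "L 0 = 0" using Lplus[of 0 0] by simp
    have injL: "inj L" using L_bij bij_is_inj by blast
    have surjL: "surj L" using L_bij bij_is_surj by blast
    have "M_subspace h (L ` P)"
      unfolding M_subspace_def
    proof (intro conjI ballI allI)
      show "f2_subspace (L ` P)" using Psub L0 Lplus unfolding f2_subspace_def
        by (metis image_iff)
    next
      fix a' b' y assume "a' \<in> L ` P" "b' \<in> L ` P"
      then obtain a b where ab: "a \<in> P" "b \<in> P" "a' = L a" "b' = L b" by blast
      obtain x where x: "y = L x" using surjL by (metis surj_def)
      from DDU[OF ab(1,2), of "(x, 0, z0)"] show "DD h a' b' y = 0"
        unfolding DD_def F_def using z0 tb0 ab x by (simp add: Lplus)
    qed
    moreover have "card (L ` P) = card P" using injL by (simp add: card_image inj_on_subset)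
    ultimately have "L ` P \<subseteq> W" using W_max e f2_dim_eq[of "L ` P" e] e3
      unfolding nontrivial_M_subspace_def by auto
    then have "P \<subseteq> W'"
    proof (intro subsetI)
      fix p assume "L ` P \<subseteq> W" "p \<in> P"
      then have "L p \<in> L ` W'" using L_W by blast
      then obtain w where "w \<in> W'" "L p = L w" by blast
      then show "p \<in> W'" using injL by (metis injD)
    qed
    then have "P \<subseteq> {0}" using PW W_int by blast
    then have "card P \<le> card {0::'v}" by (intro card_mono) auto
    then have "card P \<le> 1" by simp
    then show False using cardP by simp
  qed
qed

end
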